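(* Let $G$ be a group and $K$ a subgroup of $G$. The set $\mathrm{GCA}_K(A^G):=\{\mathcal{T}\in\mathrm{GCA}(A^G):\text{the minimal memory set of }\mathcal{T}\text{ is contained in }K\}$ is a submonoid of $\mathrm{GCA}(A^G)$ (under composition) if and only if $K$ is fully invariant, i.e. $\phi(K)\subseteq K$ for all $\phi\in\mathrm{End}(G)$.
   Context: $A$ is a finite set with $|A|\ge 2$. $A^G$ is the set of functions $G\to A$ with shift action $(g\cdot x)(k):=x(g^{-1}k)$. For $\phi\in\mathrm{End}(G)$, a $\phi$-cellular automaton is a map $\mathcal{T}:A^G\to A^G$ for which there exist a finite $T\subseteq G$ (memory set) and $\mu:A^T\to A$ with $\mathcal{T}(x)(h)=\mu((\phi(h^{-1})\cdot x)|_T)$ for all $x,h$. $\mathrm{GCA}(A^G)$ is the set of all $\phi$-cellular automata $A^G\to A^G$ over all $\phi\in\mathrm{End}(G)$; it is a monoid under composition (a composite of a $\phi$-CA with memory set $T$ after a $\psi$-CA with memory set $S$ is a $(\psi\circ\phi)$-CA with memory set $\psi(T)S$). The minimal memory set of $\mathcal{T}$ is the intersection of all its memory sets, which is itself a memory set. *)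

theory Defs
  imports Main
begin

text \<open>The group G is modelled as a type of class group_add (written additively,
  not necessarily commutative); A is a finite type with at least two elements.
  Configurations A^G are functions 'g => 'a.\<close>

definition group_endo :: "('g::group_add \<Rightarrow> 'g) \<Rightarrow> bool" where
  "group_endo \<phi> \<longleftrightarrow> (\<forall>a b. \<phi> (a + b) = \<phi> a + \<phi> b)"

definition is_subgroup :: "'g::group_add set \<Rightarrow> bool" where
  "is_subgroup K \<longleftrightarrow> 0 \<in> K \<and> (\<forall>a\<in>K. \<forall>b\<in>K. a + b \<in> K) \<and> (\<forall>a\<in>K. - a \<in> K)"

definition fully_invariant :: "'g::group_add set \<Rightarrow> bool" where
  "fully_invariant K \<longleftrightarrow> (\<forall>\<phi>. group_endo \<phi> \<longrightarrow> \<phi> ` K \<subseteq> K)"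

definition shift :: "'g::group_add \<Rightarrow> ('g \<Rightarrow> 'a) \<Rightarrow> ('g \<Rightarrow> 'a)" where
  "shift g x = (\<lambda>k. x (- g + k))"

definition restr :: "('g \<Rightarrow> 'a) \<Rightarrow> 'g set \<Rightarrow> ('g \<Rightarrow> 'a)" where
  "restr x T = (\<lambda>k. if k \<in> T then x k else undefined)"

definition phi_memory_set ::
  "('g::group_add \<Rightarrow> 'g) \<Rightarrow> 'g set \<Rightarrow> (('g \<Rightarrow> 'a) \<Rightarrow> ('g \<Rightarrow> 'a)) \<Rightarrow> bool" where
  "phi_memory_set \<phi> T \<tau> \<longleftrightarrow> finite T \<and>
     (\<exists>\<mu> :: ('g \<Rightarrow> 'a) \<Rightarrow> 'a. \<forall>x h. \<tau> x h = \<mu> (restr (shift (\<phi> (- h)) x) T))"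

definition is_phi_CA :: "('g::group_add \<Rightarrow> 'g) \<Rightarrow> (('g \<Rightarrow> 'a) \<Rightarrow> ('g \<Rightarrow> 'a)) \<Rightarrow> bool" where
  "is_phi_CA \<phi> \<tau> \<longleftrightarrow> (\<exists>T. phi_memory_set \<phi> T \<tau>)"

definition GCA :: "(('g::group_add \<Rightarrow> 'a) \<Rightarrow> ('g \<Rightarrow> 'a)) set" where
  "GCA = {\<tau>. \<exists>\<phi>. group_endo \<phi> \<and> is_phi_CA \<phi> \<tau>}"

definition memory_set :: "'g::group_add set \<Rightarrow> (('g \<Rightarrow> 'a) \<Rightarrow> ('g \<Rightarrow> 'a)) \<Rightarrow> bool" where
  "memory_set T \<tau> \<longleftrightarrow> (\<exists>\<phi>. group_endo \<phi> \<and> phi_memory_set \<phi> T \<tau>)"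

definition minimal_memory_set :: "(('g::group_add \<Rightarrow> 'a) \<Rightarrow> ('g \<Rightarrow> 'a)) \<Rightarrow> 'g set" where
  "minimal_memory_set \<tau> = \<Inter> {T. memory_set T \<tau>}"

definition GCA_K :: "'g::group_add set \<Rightarrow> (('g \<Rightarrow> 'a) \<Rightarrow> ('g \<Rightarrow> 'a)) set" where
  "GCA_K K = {\<tau> \<in> GCA. minimal_memory_set \<tau> \<subseteq> K}"

definition is_submonoid_GCA :: "(('g::group_add \<Rightarrow> 'a) \<Rightarrow> ('g \<Rightarrow> 'a)) set \<Rightarrow> bool" where
  "is_submonoid_GCA S \<longleftrightarrow> S \<subseteq> GCA \<and> id \<in> S \<and> (\<forall>\<sigma>\<in>S. \<forall>\<tau>\<in>S. \<sigma> \<circ> \<tau> \<in> S)"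

end

theory Submission
  imports Defs
begin

lemma endo_0: "group_endo \<phi> \<Longrightarrow> \<phi> 0 = (0::'g::group_add)"
  unfolding group_endo_def by (metis add.right_neutral add_left_cancel)

lemma endo_neg: "group_endo \<phi> \<Longrightarrow> \<phi> (- a) = - \<phi> (a::'g::group_add)"
proof -
  assume e: "group_endo \<phi>"
  have "\<phi> (- a) + \<phi> a = 0" using e endo_0[OF e] unfolding group_endo_def
    by (metis add.left_inverse)
  then show ?thesis by (simp add: eq_neg_iff_add_eq_0)
qed

lemma shift_0: "shift 0 x = x"
  unfolding shift_def by simp

lemma pms_0:
  assumes "phi_memory_set \<phi> T \<tau>" "group_endo \<phi>"
  shows "\<tau> x h = \<tau> (shift (\<phi> (- h)) x) 0"
proof -
  obtain \<mu> where m: "\<forall>x h. \<tau> x h = \<mu> (restr (shift (\<phi> (- h)) x) T)"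
    using assms(1) unfolding phi_memory_set_def by blast
  show ?thesis using m endo_0[OF assms(2)] by (simp add: shift_0)
qed

definition ess :: "(('g::group_add \<Rightarrow> 'a) \<Rightarrow> ('g \<Rightarrow> 'a)) \<Rightarrow> 'g set" where
  "ess \<tau> = {p. \<exists>x a. \<tau> (x(p:=a)) 0 \<noteq> \<tau> x 0}"

lemma ess_sub:
  assumes "phi_memory_set \<phi> T \<tau>" "group_endo \<phi>"
  shows "ess \<tau> \<subseteq> T"
proof
  fix p assume p: "p \<in> ess \<tau>"
  obtain \<mu> where m: "\<forall>x h. \<tau> x h = \<mu> (restr (shift (\<phi> (- h)) x) T)"
    using assms(1) unfolding phi_memory_set_def by blast
  have m0: "\<tau> x 0 = \<mu> (restr x T)" for x using m endo_0[OF assms(2)] by (simp add: shift_0)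
  show "p \<in> T"
  proof (rule ccontr)
    assume "p \<notin> T"
    obtain x a where xa: "\<tau> (x(p:=a)) 0 \<noteq> \<tau> x 0" using p unfolding ess_def by blast
    have "restr (x(p:=a)) T = restr x T" using \<open>p \<notin> T\<close> unfolding restr_def by auto
    then have "\<mu> (restr (x(p:=a)) T) = \<mu> (restr x T)" by simp
    then show False using xa m0[of "x(p:=a)"] m0[of x] by simp
  qed
qed

lemma det_aux:
  assumes "finite D"
  shows "(\<forall>p. p \<notin> D \<longrightarrow> x p = y p) \<Longrightarrow> D \<inter> ess \<tau> = {} \<Longrightarrow> \<tau> x 0 = \<tau> y 0"
  using assms
proof (induction D arbitrary: x rule: finite_induct)
  case empty
  then have "x = y" by auto
  then show ?case by simp
next
  case (insert p D)
  define x' where "x' = x(p := y p)"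
  have "\<forall>q. q \<notin> D \<longrightarrow> x' q = y q" using insert.prems(1) by (auto simp: x'_def)
  moreover have "D \<inter> ess \<tau> = {}" using insert.prems(2) by auto
  ultimately have "\<tau> x' 0 = \<tau> y 0" by (rule insert.IH)
  moreover have "\<tau> x' 0 = \<tau> x 0" using insert(5) unfolding x'_def ess_def by auto
  ultimately show ?case by simp
qed

lemma det:
  assumes "phi_memory_set \<phi> T \<tau>" "group_endo \<phi>"
    and "\<forall>p\<in>ess \<tau>. x p = y p"
  shows "\<tau> x 0 = \<tau> y 0"
proof -
  obtain \<mu> where m: "\<forall>x h. \<tau> x h = \<mu> (restr (shift (\<phi> (- h)) x) T)"
    using assms(1) unfolding phi_memory_set_def by blast
  have m0: "\<tau> x 0 = \<mu> (restr x T)" for x using m endo_0[OF assms(2)] by (simp add: shift_0)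
  have fT: "finite T" using assms(1) unfolding phi_memory_set_def by blast
  define z where "z = (\<lambda>p. if p \<in> T then y p else x p)"
  have "restr z T = restr y T" unfolding restr_def z_def by auto
  then have zy: "\<tau> z 0 = \<tau> y 0" using m0 by simp
  have "\<tau> x 0 = \<tau> z 0"
    by (rule det_aux[of "{p\<in>T. p \<notin> ess \<tau>}"]) (use fT assms(3) in \<open>auto simp: z_def\<close>)
  then show ?thesis using zy by simp
qed

lemma ess_mem:
  assumes "phi_memory_set \<phi> T \<tau>" "group_endo \<phi>"
  shows "phi_memory_set \<phi> (ess \<tau>) \<tau>"
proof -
  have fT: "finite T" using assms(1) unfolding phi_memory_set_def by blast
  have "finite (ess \<tau>)" using ess_sub[OF assms] fT finite_subset by blast
  moreover have "\<tau> x h = \<tau> (restr (shift (\<phi> (- h)) x) (ess \<tau>)) 0" for x h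
    using pms_0[OF assms, of x h] det[OF assms, of "shift (\<phi> (- h)) x" "restr (shift (\<phi> (- h)) x) (ess \<tau>)"]
    unfolding restr_def by auto
  ultimately show ?thesis unfolding phi_memory_set_def by (intro conjI exI[of _ "\<lambda>w. \<tau> w 0"] allI) (assumption+)
qed

lemma min_eq:
  assumes "\<tau> \<in> GCA"
  shows "minimal_memory_set \<tau> = ess \<tau>"
proof -
  obtain \<phi> T where e: "group_endo \<phi>" and t: "phi_memory_set \<phi> T \<tau>"
    using assms unfolding GCA_def is_phi_CA_def by blast
  have "memory_set (ess \<tau>) \<tau>" using ess_mem[OF t e] e unfolding memory_set_def by blast
  then have "minimal_memory_set \<tau> \<subseteq> ess \<tau>" unfolding minimal_memory_set_def by blast
  moreover have "ess \<tau> \<subseteq> minimal_memory_set \<tau>"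
    unfolding minimal_memory_set_def memory_set_def using ess_sub by blast
  ultimately show ?thesis by blast
qed

lemma comp_pms:
  assumes s: "phi_memory_set \<psi> S \<sigma>" and es: "group_endo \<psi>"
    and t: "phi_memory_set \<phi> T \<tau>" and et: "group_endo \<phi>"
  shows "phi_memory_set (\<phi> \<circ> \<psi>) {\<phi> s + t |s t. s \<in> S \<and> t \<in> T} (\<sigma> \<circ> \<tau>)"
proof -
  obtain \<mu>s where ms: "\<forall>x h. \<sigma> x h = \<mu>s (restr (shift (\<psi> (- h)) x) S)"
    using s unfolding phi_memory_set_def by blast
  obtain \<mu>t where mt: "\<forall>x h. \<tau> x h = \<mu>t (restr (shift (\<phi> (- h)) x) T)"
    using t unfolding phi_memory_set_def by blast
  have fS: "finite S" using s unfolding phi_memory_set_def by blast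
  have fT: "finite T" using t unfolding phi_memory_set_def by blast
  define U where "U = {\<phi> s + t |s t. s \<in> S \<and> t \<in> T}"
  have fU: "finite U"
  proof -
    have "U = (\<lambda>(s, t). \<phi> s + t) ` (S \<times> T)" unfolding U_def by auto
    then show ?thesis using fS fT by simp
  qed
  define \<mu> where "\<mu> = (\<lambda>w. \<mu>s (\<lambda>s. if s \<in> S then \<mu>t (\<lambda>t. if t \<in> T then w (\<phi> s + t) else undefined) else undefined))"
  have key: "(\<sigma> \<circ> \<tau>) x h = \<mu> (restr (shift ((\<phi> \<circ> \<psi>) (- h)) x) U)" for x h
  proof -
    define w where "w = restr (shift ((\<phi> \<circ> \<psi>) (- h)) x) U"
    have inner: "restr (shift (\<phi> (- (- \<psi> (- h) + s))) x) T
        = (\<lambda>t. if t \<in> T then w (\<phi> s + t) else undefined)" if "s \<in> S" for s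
    proof
      fix t
      have e1: "- \<phi> (- (- \<psi> (- h) + s)) = - \<phi> (\<psi> (- h)) + \<phi> s"
        using endo_neg[OF et] et unfolding group_endo_def by simp
      show "restr (shift (\<phi> (- (- \<psi> (- h) + s))) x) T t
        = (if t \<in> T then w (\<phi> s + t) else undefined)"
        using that e1 unfolding w_def restr_def shift_def U_def by (auto simp: add.assoc)
    qed
    have "restr (shift (\<psi> (- h)) (\<tau> x)) S
       = (\<lambda>s. if s \<in> S then \<mu>t (\<lambda>t. if t \<in> T then w (\<phi> s + t) else undefined) else undefined)"
    proof
      fix s show "restr (shift (\<psi> (- h)) (\<tau> x)) S s
         = (if s \<in> S then \<mu>t (\<lambda>t. if t \<in> T then w (\<phi> s + t) else undefined) else undefined)"
      proof (cases "s \<in> S")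
        case True
        have "restr (shift (\<psi> (- h)) (\<tau> x)) S s = \<tau> x (- \<psi> (- h) + s)"
          using True by (simp add: restr_def shift_def)
        also have "\<dots> = \<mu>t (restr (shift (\<phi> (- (- \<psi> (- h) + s))) x) T)" using mt by blast
        also have "\<dots> = \<mu>t (\<lambda>t. if t \<in> T then w (\<phi> s + t) else undefined)"
          using inner[OF True] by simp
        finally show ?thesis using True by simp
      next
        case False
        then show ?thesis by (simp add: restr_def)
      qed
    qed
    then have a1: "\<mu>s (restr (shift (\<psi> (- h)) (\<tau> x)) S) = \<mu> w" unfolding \<mu>_def by (rule arg_cong)
    have a2: "(\<sigma> \<circ> \<tau>) x h = \<mu>s (restr (shift (\<psi> (- h)) (\<tau> x)) S)"
      using ms by (simp only: comp_apply)
    show ?thesis using trans[OF a2 a1] unfolding w_def .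
  qed
  show ?thesis unfolding phi_memory_set_def U_def[symmetric] using fU key by blast
qed

lemma endo_comp: "group_endo \<phi> \<Longrightarrow> group_endo \<psi> \<Longrightarrow> group_endo (\<phi> \<circ> \<psi>)"
  unfolding group_endo_def by simp

lemma min_sub: "phi_memory_set \<phi> T \<tau> \<Longrightarrow> group_endo \<phi> \<Longrightarrow> minimal_memory_set \<tau> \<subseteq> T"
  unfolding minimal_memory_set_def memory_set_def by blast

theorem proposition2p8:
  fixes K :: "'g::group_add set"
  assumes "card (UNIV :: 'a::finite set) \<ge> 2"
    and "is_subgroup K"
  shows "is_submonoid_GCA (GCA_K K :: (('g \<Rightarrow> 'a) \<Rightarrow> ('g \<Rightarrow> 'a)) set) \<longleftrightarrow> fully_invariant K"
proof
  assume sm: "is_submonoid_GCA (GCA_K K :: (('g \<Rightarrow> 'a) \<Rightarrow> ('g \<Rightarrow> 'a)) set)"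
  obtain a0 a1 :: 'a where a01: "a0 \<noteq> a1"
  proof -
    have "\<not> card (UNIV :: 'a set) \<le> Suc 0" using assms(1) by simp
    then show ?thesis using that card_le_Suc0_iff_eq[of "UNIV :: 'a set"] by auto
  qed
  show "fully_invariant K" unfolding fully_invariant_def
  proof (intro allI impI subsetI)
    fix \<phi> :: "'g \<Rightarrow> 'g" and y assume e: "group_endo \<phi>" and y: "y \<in> \<phi> ` K"
    then obtain k where k: "k \<in> K" "y = \<phi> k" by blast
    define \<sigma> :: "('g \<Rightarrow> 'a) \<Rightarrow> ('g \<Rightarrow> 'a)" where "\<sigma> = (\<lambda>x h. x (h + k))"
    define \<tau> :: "('g \<Rightarrow> 'a) \<Rightarrow> ('g \<Rightarrow> 'a)" where "\<tau> = (\<lambda>x h. x (\<phi> h))"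
    have eid: "group_endo id" unfolding group_endo_def by simp
    have ps: "phi_memory_set id {k} \<sigma>" unfolding phi_memory_set_def
      by (intro conjI exI[of _ "\<lambda>w. w k"]) (auto simp: \<sigma>_def restr_def shift_def)
    have pt: "phi_memory_set \<phi> {0} \<tau>" unfolding phi_memory_set_def
      by (intro conjI exI[of _ "\<lambda>w. w 0"]) (auto simp: \<tau>_def restr_def shift_def endo_neg[OF e])
    have "\<sigma> \<in> GCA_K K" unfolding GCA_K_def GCA_def is_phi_CA_def
      using ps eid min_sub[OF ps eid] k(1) by blast
    moreover have "\<tau> \<in> GCA_K K" unfolding GCA_K_def GCA_def is_phi_CA_def
      using pt e min_sub[OF pt e] assms(2) unfolding is_subgroup_def by blast
    ultimately have c: "\<sigma> \<circ> \<tau> \<in> GCA_K K" using sm unfolding is_submonoid_GCA_def by blast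
    then have "ess (\<sigma> \<circ> \<tau>) \<subseteq> K" using min_eq unfolding GCA_K_def by fastforce
    moreover have "\<phi> k \<in> ess (\<sigma> \<circ> \<tau>)" unfolding ess_def
      using a01 by (intro CollectI exI[of _ "\<lambda>_. a0"] exI[of _ a1]) (simp add: \<sigma>_def \<tau>_def)
    ultimately show "y \<in> K" using k by blast
  qed
next
  assume fi: "fully_invariant K"
  have sg: "0 \<in> K" "\<And>a b. a \<in> K \<Longrightarrow> b \<in> K \<Longrightarrow> a + b \<in> K"
    using assms(2) unfolding is_subgroup_def by auto
  have eid: "group_endo id" unfolding group_endo_def by simp
  have pid: "phi_memory_set id {0} (id :: ('g \<Rightarrow> 'a) \<Rightarrow> ('g \<Rightarrow> 'a))" unfolding phi_memory_set_def
    by (intro conjI exI[of _ "\<lambda>w. w 0"]) (auto simp: restr_def shift_def)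
  have "id \<in> (GCA_K K :: (('g \<Rightarrow> 'a) \<Rightarrow> ('g \<Rightarrow> 'a)) set)" unfolding GCA_K_def GCA_def is_phi_CA_def
    using pid eid min_sub[OF pid eid] sg(1) by blast
  moreover have "\<sigma> \<circ> \<tau> \<in> GCA_K K" if s: "\<sigma> \<in> GCA_K K" and t: "\<tau> \<in> GCA_K K"
    for \<sigma> \<tau> :: "('g \<Rightarrow> 'a) \<Rightarrow> ('g \<Rightarrow> 'a)"
  proof -
    obtain \<psi> S where es: "group_endo \<psi>" and ps: "phi_memory_set \<psi> S \<sigma>"
      using s unfolding GCA_K_def GCA_def is_phi_CA_def by blast
    obtain \<phi> T where et: "group_endo \<phi>" and pt: "phi_memory_set \<phi> T \<tau>"
      using t unfolding GCA_K_def GCA_def is_phi_CA_def by blast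
    have sK: "ess \<sigma> \<subseteq> K" using s min_eq unfolding GCA_K_def by fastforce
    have tK: "ess \<tau> \<subseteq> K" using t min_eq unfolding GCA_K_def by fastforce
    have pc: "phi_memory_set (\<phi> \<circ> \<psi>) {\<phi> s + t |s t. s \<in> ess \<sigma> \<and> t \<in> ess \<tau>} (\<sigma> \<circ> \<tau>)"
      using comp_pms[OF ess_mem[OF ps es] es ess_mem[OF pt et] et] .
    have ec: "group_endo (\<phi> \<circ> \<psi>)" using endo_comp[OF et es] .
    have phiK: "\<phi> s \<in> K" if "s \<in> K" for s using fi et that unfolding fully_invariant_def by blast
    have "{\<phi> s + t |s t. s \<in> ess \<sigma> \<and> t \<in> ess \<tau>} \<subseteq> K" using sK tK phiK sg(2) by blast
    then show ?thesis unfolding GCA_K_def GCA_def is_phi_CA_def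
      using pc ec min_sub[OF pc ec] by blast
  qed
  ultimately show "is_submonoid_GCA (GCA_K K :: (('g \<Rightarrow> 'a) \<Rightarrow> ('g \<Rightarrow> 'a)) set)"
    unfolding is_submonoid_GCA_def GCA_K_def by blast
qed

end
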